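(* Let $U$ be a complete two-phase quantum walk. Then $U$ is unitary equivalent to \begin{align*} U_{r_+,r_-,\sigma_1,\sigma_2}={}&\sum_{n\ge0}|e_1^{n-1}\rangle\langle r_+e_1^n+s_+e_2^n|+|e_2^{n+1}\rangle\langle -e^{i\sigma_1}s_+e_1^n+e^{i\sigma_1}r_+e_2^n|\\ &+\sum_{n\le-1}|e_1^{n-1}\rangle\langle r_-e_1^n+e^{i\sigma_2}s_-e_2^n|+|e_2^{n+1}\rangle\langle -s_-e_1^n+e^{i\sigma_2}r_-e_2^n| \end{align*} for some $0\le r_+,r_-\le1$ and $\sigma_1,\sigma_2\in\mathbb R$, where $s_\varepsilon=\sqrt{1-r_\varepsilon^2}$ ($\varepsilon=+,-$). Moreover, writing $U_{r,\sigma}=U_{r_+,r_-,\sigma_1,\sigma_2}$, if $0<r_\varepsilon,r'_\varepsilon<1$ and $\sigma_i,\sigma'_i\in[0,2\pi)$, then $U_{r,\sigma}$ and $U_{r',\sigma'}$ are unitary equivalent if and only if $r=r'$ and $\sigma=\sigma'$.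
   Context: Let $\mathcal H_n=\mathbb C^2$ for $n\in\mathbb Z$, $\mathcal H=\bigoplus_{n\in\mathbb Z}\mathcal H_n$, $P_n$ the orthogonal projection onto $\mathcal H_n$, and $\{e_1^n,e_2^n\}$ the standard basis of $\mathcal H_n$; each $\mathcal H_n$ is identified with $\mathbb C^2$. Dirac notation: $|x\rangle\langle y|$ is the operator $z\mapsto\langle y,z\rangle x$ (inner product conjugate-linear in the first argument). A one-dimensional quantum walk is a unitary $U$ on $\mathcal H$ with $\operatorname{rank}(P_nUP_m)=1$ if $m=n\pm1$ and $0$ otherwise. Every such $U$ can be written as $U=\sum_{n\in\mathbb Z}|\xi_{n-1,n}\rangle\langle\zeta_{n-1,n}|+|\xi_{n+1,n}\rangle\langle\zeta_{n+1,n}|$, where $\{\xi_{n,n+1},\xi_{n+1,n}\}_{n}$ and $\{\zeta_{n,n+1},\zeta_{n+1,n}\}_{n}$ are orthonormal bases of $\mathcal H$ with $\xi_{n,n+1},\zeta_{n+1,n}\in\mathcal H_n$ and $\xi_{n+1,n},\zeta_{n,n+1}\in\mathcal H_{n+1}$. $U$ is a complete two-phase quantum walk if it has such a representation for which there exist $\xi_1^\pm,\xi_2^\pm,\zeta_1^\pm,\zeta_2^\pm\in\mathbb C^2$ with $\xi_{n,n+1}=\xi_1^+$, $\xi_{n,n-1}=\xi_2^+$, $\zeta_{n-1,n}=\zeta_1^+$, $\zeta_{n+1,n}=\zeta_2^+$ for all $n\ge0$, and $\xi_{n,n+1}=\xi_1^-$, $\xi_{n,n-1}=\xi_2^-$,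 $\zeta_{n-1,n}=\zeta_1^-$, $\zeta_{n+1,n}=\zeta_2^-$ for all $n\le-1$. Since $U$ and $e^{i\lambda}U$ are identified, unitaries $U_1,U_2$ on $\mathcal H$ are called unitary equivalent if there exist $\lambda\in\mathbb R$ and a unitary $W=\bigoplus_nW_n$ ($W_n$ unitary on $\mathcal H_n$) with $e^{i\lambda}WU_1W^*=U_2$. *)

theory Defs
  imports "HOL-Analysis.Analysis"
begin

(* H = direct sum over n in Z of H_n = C^2.  A (row/column-finite) operator on H is
   represented by its block matrix: U n m = P_n U P_m viewed as a 2x2 complex matrix
   w.r.t. the standard bases {e_1^n, e_2^n}, {e_1^m, e_2^m}. *)
type_synonym blockop = "int \<Rightarrow> int \<Rightarrow> complex^2^2"

definition vec2 :: "complex \<Rightarrow> complex \<Rightarrow> complex^2" where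
  "vec2 a b = vector [a, b]"

definition e1 :: "complex^2" where "e1 = vec2 1 0"
definition e2 :: "complex^2" where "e2 = vec2 0 1"

definition cinner :: "complex^2 \<Rightarrow> complex^2 \<Rightarrow> complex" where
  "cinner x y = (\<Sum>i\<in>UNIV. cnj (x$i) * y$i)"

(* |x><y| :  z \<mapsto> <y,z> x *)
definition ketbra :: "complex^2 \<Rightarrow> complex^2 \<Rightarrow> complex^2^2" where
  "ketbra x y = (\<chi> i j. x$i * cnj (y$j))"

definition cadj :: "complex^2^2 \<Rightarrow> complex^2^2" where
  "cadj A = (\<chi> i j. cnj (A$j$i))"

definition csmult :: "complex \<Rightarrow> complex^2^2 \<Rightarrow> complex^2^2" where
  "csmult c A = (\<chi> i j. c * A$i$j)"

definition unitary2 :: "complex^2^2 \<Rightarrow> bool" where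
  "unitary2 A \<longleftrightarrow> A ** cadj A = mat 1 \<and> cadj A ** A = mat 1"

definition orthonormal_pair :: "complex^2 \<Rightarrow> complex^2 \<Rightarrow> bool" where
  "orthonormal_pair x y \<longleftrightarrow> cinner x x = 1 \<and> cinner y y = 1 \<and> cinner x y = 0"

definition row_col_finite :: "blockop \<Rightarrow> bool" where
  "row_col_finite U \<longleftrightarrow> (\<forall>n. finite {m. U n m \<noteq> 0} \<and> finite {m. U m n \<noteq> 0})"

definition bmult :: "blockop \<Rightarrow> blockop \<Rightarrow> blockop" where
  "bmult A B n m = (\<Sum>k\<in>{k. A n k \<noteq> 0}. A n k ** B k m)"

definition badj :: "blockop \<Rightarrow> blockop" where
  "badj U n m = cadj (U m n)"

definition bid :: blockop where
  "bid n m = (if n = m then mat 1 else 0)"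

definition bunitary :: "blockop \<Rightarrow> bool" where
  "bunitary U \<longleftrightarrow> row_col_finite U \<and> bmult (badj U) U = bid \<and> bmult U (badj U) = bid"

definition qwalk :: "blockop \<Rightarrow> bool" where
  "qwalk U \<longleftrightarrow> bunitary U \<and>
     (\<forall>n m. rank (U n m) = (if m = n + 1 \<or> m = n - 1 then 1 else 0))"

(* U = sum_n |xi_{n-1,n}><zeta_{n-1,n}| + |xi_{n+1,n}><zeta_{n+1,n}|, with
   xi_{a,b} \<in> H_a, zeta_{a,b} \<in> H_b; {xi} and {zeta} orthonormal bases of H, i.e.
   {xi_{n,n+1}, xi_{n,n-1}} and {zeta_{n+1,n}, zeta_{n-1,n}} are ONBs of H_n = C^2. *)
definition walk_rep :: "blockop \<Rightarrow> (int \<Rightarrow> int \<Rightarrow> complex^2) \<Rightarrow> (int \<Rightarrow> int \<Rightarrow> complex^2) \<Rightarrow> bool" where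
  "walk_rep U \<xi> \<zeta> \<longleftrightarrow>
     (\<forall>n. orthonormal_pair (\<xi> n (n + 1)) (\<xi> n (n - 1))) \<and>
     (\<forall>n. orthonormal_pair (\<zeta> (n + 1) n) (\<zeta> (n - 1) n)) \<and>
     (\<forall>a b. U a b = (if a = b - 1 \<or> a = b + 1 then ketbra (\<xi> a b) (\<zeta> a b) else 0))"

definition complete_two_phase :: "blockop \<Rightarrow> bool" where
  "complete_two_phase U \<longleftrightarrow> qwalk U \<and>
     (\<exists>\<xi> \<zeta> \<xi>1p \<xi>2p \<zeta>1p \<zeta>2p \<xi>1m \<xi>2m \<zeta>1m \<zeta>2m. walk_rep U \<xi> \<zeta> \<and>
        (\<forall>n::int. n \<ge> 0 \<longrightarrow> \<xi> n (n + 1) = \<xi>1p \<and> \<xi> n (n - 1) = \<xi>2p \<and>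
                                \<zeta> (n - 1) n = \<zeta>1p \<and> \<zeta> (n + 1) n = \<zeta>2p) \<and>
        (\<forall>n::int. n \<le> -1 \<longrightarrow> \<xi> n (n + 1) = \<xi>1m \<and> \<xi> n (n - 1) = \<xi>2m \<and>
                                \<zeta> (n - 1) n = \<zeta>1m \<and> \<zeta> (n + 1) n = \<zeta>2m))"

definition unit_equiv :: "blockop \<Rightarrow> blockop \<Rightarrow> bool" where
  "unit_equiv U1 U2 \<longleftrightarrow> (\<exists>(lam::real) (W :: int \<Rightarrow> complex^2^2).
      (\<forall>n. unitary2 (W n)) \<and>
      (\<forall>n m. csmult (cis lam) (W n ** U1 n m ** cadj (W m)) = U2 n m))"

definition Uwalk :: "real \<Rightarrow> real \<Rightarrow> real \<Rightarrow> real \<Rightarrow> blockop" where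
  "Uwalk rp rm \<sigma>1 \<sigma>2 a n =
     (let sp = complex_of_real (sqrt (1 - rp\<^sup>2)); sm = complex_of_real (sqrt (1 - rm\<^sup>2));
          rp' = complex_of_real rp; rm' = complex_of_real rm in
      if a = n - 1 then
        (if n \<ge> 0 then ketbra e1 (vec2 rp' sp)
         else ketbra e1 (vec2 rm' (cis \<sigma>2 * sm)))
      else if a = n + 1 then
        (if n \<ge> 0 then ketbra e2 (vec2 (- cis \<sigma>1 * sp) (cis \<sigma>1 * rp'))
         else ketbra e2 (vec2 (- sm) (cis \<sigma>2 * rm')))
      else 0)"

end

theory Submission
  imports Defs
begin

lemma vec2_1[simp]: "vec2 a b $ 1 = a" by (simp add: vec2_def)
lemma vec2_2[simp]: "vec2 a b $ 2 = b" by (simp add: vec2_def)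
lemma vec2_eq_iff: "vec2 a b = vec2 c d \<longleftrightarrow> a = c \<and> b = d"
  by (metis vec2_1 vec2_2)
lemma vec2_eta: "(v::complex^2) = vec2 (v$1) (v$2)"
  by (simp add: vec_eq_iff forall_2)
lemma cinner2: "cinner x y = cnj (x$1) * y$1 + cnj (x$2) * y$2"
  by (simp add: cinner_def sum_2)
lemma ketbra_nth[simp]: "ketbra x y $ i $ j = x$i * cnj (y$j)"
  by (simp add: ketbra_def)
lemma cadj_nth[simp]: "cadj A $ i $ j = cnj (A$j$i)"
  by (simp add: cadj_def)
lemma csmult_nth[simp]: "csmult c A $ i $ j = c * A$i$j"
  by (simp add: csmult_def)
lemma mm_nth: "((A::complex^2^2) ** B) $ i $ j = A$i$1 * B$1$j + A$i$2 * B$2$j"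
  by (simp add: matrix_matrix_mult_def sum_2)
lemma mv_nth: "((A::complex^2^2) *v x) $ i = A$i$1 * x$1 + A$i$2 * x$2"
  by (simp add: matrix_vector_mult_def sum_2)
lemma mat_eq2: "(A::complex^2^2) = B \<longleftrightarrow> A$1$1 = B$1$1 \<and> A$1$2 = B$1$2 \<and> A$2$1 = B$2$1 \<and> A$2$2 = B$2$2"
  by (auto simp: vec_eq_iff forall_2)
lemma mat1_nth: "(mat 1 :: complex^2^2) $ i $ j = (if i = j then 1 else 0)"
  by (simp add: mat_def)

lemma kb_mult: "(W::complex^2^2) ** ketbra x y ** cadj V = ketbra (W *v x) (V *v y)"
  by (simp add: mat_eq2 mm_nth mv_nth algebra_simps)

lemma csmult_kb: "csmult c (ketbra x y) = ketbra (c *s x) y"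
  by (simp add: mat_eq2 algebra_simps)


lemma e1_eq: "e1 = vec2 1 0" by (simp add: e1_def)
lemma e2_eq: "e2 = vec2 0 1" by (simp add: e2_def)

lemma Uw_lo: "Uwalk rp rm s1 s2 (n - 1) n =
   (if n \<ge> 0 then ketbra e1 (vec2 (of_real rp) (of_real (sqrt (1 - rp\<^sup>2))))
    else ketbra e1 (vec2 (of_real rm) (cis s2 * of_real (sqrt (1 - rm\<^sup>2)))))"
  by (simp add: Uwalk_def Let_def)

lemma Uw_hi: "Uwalk rp rm s1 s2 (n + 1) n =
   (if n \<ge> 0 then ketbra e2 (vec2 (- cis s1 * of_real (sqrt (1 - rp\<^sup>2))) (cis s1 * of_real rp))
    else ketbra e2 (vec2 (- of_real (sqrt (1 - rm\<^sup>2))) (cis s2 * of_real rm)))"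
  by (simp add: Uwalk_def Let_def)

lemma unit_cnj: "cmod z = 1 \<Longrightarrow> z * cnj z = 1"
  using complex_norm_square[of z] by simp
lemma unit_cnj': "cmod z = 1 \<Longrightarrow> cnj z * z = 1"
  using unit_cnj by (simp add: mult.commute)

lemma unit_real_eq:
  fixes u :: complex
  assumes "cmod u = 1" "u * of_real x = of_real y" "x \<ge> 0" "y \<ge> 0"
  shows "x = y"
proof -
  have "cmod (u * of_real x) = cmod (of_real y)" using assms(2) by simp
  then have "cmod u * \<bar>x\<bar> = \<bar>y\<bar>" by (simp only: norm_mult norm_of_real)
  then show ?thesis using assms(1,3,4) by simp
qed

lemma unit_real_eq1:
  fixes u :: complex
  assumes "u * of_real x = of_real x" "x \<noteq> 0"
  shows "u = 1"
proof -
  have "(u - 1) * of_real x = 0" using assms(1) by (simp add: algebra_simps)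
  then show ?thesis using assms(2) by simp
qed

lemma cis_inj:
  assumes "cis a = cis b" "a \<in> {0..<2*pi}" "b \<in> {0..<2*pi}"
  shows "a = b"
proof -
  have "sin a = sin b \<and> cos a = cos b" using assms(1)
    by (metis cis.sel(1) cis.sel(2))
  then obtain n :: int where n: "a = b + 2 * pi * n" using sin_cos_eq_iff by blast
  have h1: "2*pi*real_of_int n < 2*pi" "-(2*pi) < 2*pi*real_of_int n"
    using n assms(2,3) by (simp_all only: atLeastLessThan_iff; linarith)+
  have "n < 1" using h1(1) by simp
  moreover have "-1 < n"
  proof -
    have "pi * (-1) < pi * real_of_int n" using h1(2) by simp
    then have "-1 < real_of_int n" using mult_less_cancel_left_pos[OF pi_gt_zero] by blast
    then show ?thesis by simp
  qed
  ultimately have "n = 0" by simp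
  then show ?thesis using n by simp
qed


lemma cnj_unit_eq: "cmod (x::complex) = 1 \<Longrightarrow> cnj x * y = 1 \<Longrightarrow> y = x"
proof -
  assume a: "cmod x = 1" "cnj x * y = 1"
  have "y = (x * cnj x) * y" using unit_cnj[OF a(1)] by simp
  also have "\<dots> = x * (cnj x * y)" by (simp add: mult.assoc)
  finally show ?thesis using a(2) by simp
qed

lemma unit_of_cnj: "cnj z * z = 1 \<Longrightarrow> cmod z = 1"
proof -
  assume "cnj z * z = 1"
  then have "complex_of_real (cmod z ^ 2) = 1" using complex_norm_square[of z] by (simp add: mult.commute)
  then have "cmod z ^ 2 = 1" by (metis of_real_1 of_real_eq_iff)
  then show ?thesis using norm_ge_zero[of z] by (auto simp add: power2_eq_1_iff)
qed

lemma kb_e1: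
  assumes "ketbra x y = ketbra e1 z" "z \<noteq> 0"
  shows "x$2 = 0 \<and> z = cnj (x$1) *s y"
proof -
  have h: "x$i * cnj (y$j) = e1$i * cnj (z$j)" for i j using assms(1) by (metis ketbra_nth)
  have z: "z$1 \<noteq> 0 \<or> z$2 \<noteq> 0" using assms(2) by (metis vec2_eta vec2_eq_iff zero_index)
  have x2: "x$2 = 0" using h[of 2 1] h[of 2 2] h[of 1 1] h[of 1 2] z by (auto simp: e1_eq)
  have "z$j = cnj (x$1) * y$j" for j using h[of 1 j] by (simp add: e1_eq) (metis complex_cnj_cnj complex_cnj_mult)
  then show ?thesis using x2 by (simp add: vec_eq_iff)
qed

lemma kb_e2:
  assumes "ketbra x y = ketbra e2 z" "z \<noteq> 0"
  shows "x$1 = 0 \<and> z = cnj (x$2) *s y"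
proof -
  have h: "x$i * cnj (y$j) = e2$i * cnj (z$j)" for i j using assms(1) by (metis ketbra_nth)
  have z: "z$1 \<noteq> 0 \<or> z$2 \<noteq> 0" using assms(2) by (metis vec2_eta vec2_eq_iff zero_index)
  have x2: "x$1 = 0" using h[of 1 1] h[of 1 2] h[of 2 1] h[of 2 2] z by (auto simp: e2_eq)
  have "z$j = cnj (x$2) * y$j" for j using h[of 2 j] by (simp add: e2_eq) (metis complex_cnj_cnj complex_cnj_mult)
  then show ?thesis using x2 by (simp add: vec_eq_iff)
qed


lemma vec2_nz1: "a \<noteq> 0 \<Longrightarrow> vec2 a b \<noteq> 0"
  by (metis vec2_1 zero_index)
lemma vec2_nz2: "b \<noteq> 0 \<Longrightarrow> vec2 a b \<noteq> 0"
  by (metis vec2_2 zero_index)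
lemma smult_vec2: "(k::complex) *s vec2 x y = vec2 (k*x) (k*y)"
  by (simp add: vec_eq_iff forall_2)
lemma mv_vec2_diag: "(A::complex^2^2)$1$2 = 0 \<Longrightarrow> A$2$1 = 0 \<Longrightarrow> A *v vec2 x y = vec2 (A$1$1 * x) (A$2$2 * y)"
  by (simp add: vec_eq_iff forall_2 mv_nth)

lemma step_eq:
  fixes x y :: complex
  assumes "cmod x = 1" "cmod y = 1" "complex_of_real r' = cnj x * (y * of_real r)" "0 < r" "0 < r'"
  shows "r = r' \<and> y = x"
proof -
  have u: "cmod (cnj x * y) = 1" using assms(1,2) by (simp add: norm_mult)
  have e: "(cnj x * y) * of_real r = of_real r'" using assms(3) by (simp add: mult.assoc)
  have rr: "r = r'" using unit_real_eq[OF u e] assms(4,5) by simp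
  then have "cnj x * y = 1" using unit_real_eq1[of "cnj x * y" r] e assms(4) by simp
  then show ?thesis using rr cnj_unit_eq[OF assms(1)] by blast
qed

lemma part2:
  fixes rp rm s1 s2 rp' rm' s1' s2' :: real
  assumes r: "0<rp" "rp<1" "0<rm" "rm<1" "0<rp'" "rp'<1" "0<rm'" "rm'<1"
  and ue: "unit_equiv (Uwalk rp rm s1 s2) (Uwalk rp' rm' s1' s2')"
  shows "rp = rp' \<and> rm = rm' \<and> cis s1 = cis s1' \<and> cis s2 = cis s2'"
proof -
  obtain lam W where Wu: "\<And>n. unitary2 (W n)" and
    H: "\<And>n m. csmult (cis lam) (W n ** Uwalk rp rm s1 s2 n m ** cadj (W m)) = Uwalk rp' rm' s1' s2' n m"
    using ue unfolding unit_equiv_def by blast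
  define c where "c = cis lam"
  have c1: "cmod c = 1" by (simp add: c_def)
  have cnz: "c \<noteq> 0" using c1 by auto
  define sp where "sp = sqrt (1 - rp\<^sup>2)"
  define sm where "sm = sqrt (1 - rm\<^sup>2)"
  define sp' where "sp' = sqrt (1 - rp'\<^sup>2)"
  define sm' where "sm' = sqrt (1 - rm'\<^sup>2)"
  have sq: "0 < sqrt (1 - x\<^sup>2)" if "0 < x" "x < 1" for x :: real
  proof -
    have "x\<^sup>2 < 1" using that by (simp add: power_less_one_iff abs_less_iff)
    then show ?thesis by simp
  qed
  have spos: "sp > 0" "sm > 0" "sp' > 0" "sm' > 0"
    using sq r unfolding sp_def sm_def sp'_def sm'_def by auto
  have LoP: "ketbra (c *s (W (n-1) *v e1)) (W n *v vec2 (of_real rp) (of_real sp)) = ketbra e1 (vec2 (of_real rp') (of_real sp'))"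
    if "n \<ge> 0" for n
    using H[of "n-1" n] that by (simp add: Uw_lo kb_mult csmult_kb sp_def sp'_def c_def)
  have LoM: "ketbra (c *s (W (n-1) *v e1)) (W n *v vec2 (of_real rm) (cis s2 * of_real sm)) = ketbra e1 (vec2 (of_real rm') (cis s2' * of_real sm'))"
    if "n < 0" for n
    using H[of "n-1" n] that by (simp add: Uw_lo kb_mult csmult_kb sm_def sm'_def c_def)
  have HiP: "ketbra (c *s (W (n+1) *v e2)) (W n *v vec2 (- cis s1 * of_real sp) (cis s1 * of_real rp)) = ketbra e2 (vec2 (- cis s1' * of_real sp') (cis s1' * of_real rp'))"
    if "n \<ge> 0" for n
    using H[of "n+1" n] that by (simp add: Uw_hi kb_mult csmult_kb sp_def sp'_def c_def)
  have HiM: "ketbra (c *s (W (n+1) *v e2)) (W n *v vec2 (- of_real sm) (cis s2 * of_real rm)) = ketbra e2 (vec2 (- of_real sm') (cis s2' * of_real rm'))"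
    if "n < 0" for n
    using H[of "n+1" n] that by (simp add: Uw_hi kb_mult csmult_kb sm_def sm'_def c_def)
  note LoP' = kb_e1[OF LoP vec2_nz1] and LoM' = kb_e1[OF LoM vec2_nz1]
  note HiP' = kb_e2[OF HiP vec2_nz2] and HiM' = kb_e2[OF HiM vec2_nz2]
  have e1c: "(c *s (A *v e1))$2 = c * A$2$1" "(c *s (A *v e1))$1 = c * A$1$1" for A :: "complex^2^2"
    by (simp_all add: mv_nth e1_eq)
  have e2c: "(c *s (A *v e2))$1 = c * A$1$2" "(c *s (A *v e2))$2 = c * A$2$2" for A :: "complex^2^2"
    by (simp_all add: mv_nth e2_eq)
  have off21: "W k $2$1 = 0" for k
  proof (cases "k+1 \<ge> 0")
    case True
    then show ?thesis using LoP'[of "k+1"] r spos e1c[of "W k"] cnz by simp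
  next
    case False
    then show ?thesis using LoM'[of "k+1"] r spos e1c[of "W k"] cnz by simp
  qed
  have off12: "W k $1$2 = 0" for k
  proof (cases "k-1 \<ge> 0")
    case True
    then show ?thesis using HiP'[of "k-1"] r spos e2c[of "W k"] cnz by simp
  next
    case False
    then show ?thesis using HiM'[of "k-1"] r spos e2c[of "W k"] cnz by simp
  qed
  define a where "a k = W k $1$1" for k
  define b where "b k = W k $2$2" for k
  have Wv: "W k *v vec2 x y = vec2 (a k * x) (b k * y)" for k x y
    using mv_vec2_diag[OF off12 off21] a_def b_def by simp
  have ab1: "cmod (a k) = 1 \<and> cmod (b k) = 1" for k
  proof -
    have "cadj (W k) ** W k = mat 1" using Wu[of k] unfolding unitary2_def by blast
    then have "(cadj (W k) ** W k)$1$1 = 1" "(cadj (W k) ** W k)$2$2 = 1" by (simp_all add: mat1_nth)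
    then have "cnj (a k) * a k = 1" "cnj (b k) * b k = 1"
      using off12[of k] off21[of k] by (simp_all add: mm_nth a_def b_def)
    then show ?thesis using unit_of_cnj by blast
  qed
  have P: "of_real rp' = cnj (c * a (n-1)) * (a n * of_real rp) \<and> of_real sp' = cnj (c * a (n-1)) * (b n * of_real sp)"
    if "n \<ge> 0" for n
    using LoP'[of n] that r spos e1c[of "W (n-1)"] by (simp add: Wv smult_vec2 vec2_eq_iff a_def)
  have M: "of_real rm' = cnj (c * a (n-1)) * (a n * of_real rm) \<and> cis s2' * of_real sm' = cnj (c * a (n-1)) * (b n * (cis s2 * of_real sm))"
    if "n < 0" for n
    using LoM'[of n] that r spos e1c[of "W (n-1)"] by (simp add: Wv smult_vec2 vec2_eq_iff a_def)
  have Q: "- cis s1' * of_real sp' = cnj (c * b (n+1)) * (a n * (- cis s1 * of_real sp))"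
    if "n \<ge> 0" for n
    using HiP'[of n] that r spos e2c[of "W (n+1)"] by (simp add: Wv smult_vec2 vec2_eq_iff b_def)
  have N: "- of_real sm' = cnj (c * b (n+1)) * (a n * (- of_real sm))"
    if "n < 0" for n
    using HiM'[of n] that r spos e2c[of "W (n+1)"] by (simp add: Wv smult_vec2 vec2_eq_iff b_def)
  have cu: "cmod (c * x) = 1" if "cmod x = 1" for x using c1 that by (simp add: norm_mult)
  have s1: "rp = rp' \<and> a 0 = c * a (-1)"
    using step_eq[OF cu[OF ab1[of "-1", THEN conjunct1]] ab1[of "0", THEN conjunct1], of rp' rp] P[of 0] r by simp
  have spe: "sp = sp'" using s1 unfolding sp_def sp'_def by simp
  have s2: "a 1 = c * a 0"
    using step_eq[OF cu[OF ab1[of "0", THEN conjunct1]] ab1[of "1", THEN conjunct1], of rp' rp] P[of 1] r by simp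
  have s3: "b 1 = c * a 0"
    using step_eq[OF cu[OF ab1[of "0", THEN conjunct1]] ab1[of "1", THEN conjunct2], of sp' sp] P[of 1] spos by simp
  have s4: "rm = rm' \<and> a (-1) = c * a (-2)"
    using step_eq[OF cu[OF ab1[of "-2", THEN conjunct1]] ab1[of "-1", THEN conjunct1], of rm' rm] M[of "-1"] r by simp
  have sme: "sm = sm'" using s4 unfolding sm_def sm'_def by simp
  have s5: "b 0 = c * a (-1)"
    using step_eq[OF cu[OF ab1[of "-1", THEN conjunct1]] ab1[of "0", THEN conjunct2], of sp' sp] P[of 0] spos by simp
  have s6: "a (-1) = c * b 0"
  proof -
    have "complex_of_real sm' = cnj (c * b 0) * (a (-1) * of_real sm)" using N[of "-1"] by simp
    then show ?thesis using step_eq[OF cu[OF ab1[of "0", THEN conjunct2]] ab1[of "-1", THEN conjunct1], of sm' sm] ab1 spos by simp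
  qed
  have s7: "a (-2) = c * b (-1)"
  proof -
    have "complex_of_real sm' = cnj (c * b (-1)) * (a (-2) * of_real sm)" using N[of "-2"] by simp
    then show ?thesis using step_eq[OF cu[OF ab1[of "(-1)", THEN conjunct2]] ab1[of "-2", THEN conjunct1], of sm' sm] ab1 spos by simp
  qed
  have cc: "c * c = 1"
  proof -
    have "a (-1) = (c * c) * a (-1)" using s6 s5 s1 by (simp add: mult.assoc)
    moreover have "a (-1) \<noteq> 0" using ab1[of "-1"] by auto
    ultimately show ?thesis by simp
  qed
  have cnjcc: "cnj c * cnj c = 1" using cc by (metis complex_cnj_mult complex_cnj_one)
  have E1: "cis s1' = cis s1"
  proof -
    have "- cis s1' * of_real sp = cnj (c * b 1) * (a 0 * (- cis s1 * of_real sp))" using Q[of 0] spe by simp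
    then have "cis s1' * of_real sp = (cnj (c * b 1) * a 0 * cis s1) * of_real sp" by (simp add: algebra_simps)
    then have "cis s1' = cnj (c * b 1) * a 0 * cis s1" using spos by simp
    also have "\<dots> = (cnj c * cnj c) * (cnj (a 0) * a 0) * cis s1" using s3 by (simp add: algebra_simps)
    also have "\<dots> = cis s1" using cnjcc unit_cnj'[OF ab1[THEN conjunct1]] by simp
    finally show ?thesis .
  qed
  have E2: "cis s2' = cis s2"
  proof -
    have "cis s2' * of_real sm = cnj (c * a (-2)) * (b (-1) * (cis s2 * of_real sm))" using M[of "-1"] sme by simp
    then have "cis s2' * of_real sm = (cnj (c * a (-2)) * b (-1) * cis s2) * of_real sm" by (simp add: algebra_simps)
    then have "cis s2' = cnj (c * a (-2)) * b (-1) * cis s2" using spos by simp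
    also have "\<dots> = (cnj c * cnj c) * (cnj (b (-1)) * b (-1)) * cis s2" using s7 by (simp add: algebra_simps)
    also have "\<dots> = cis s2" using cnjcc unit_cnj'[OF ab1[THEN conjunct2]] by simp
    finally show ?thesis .
  qed
  show ?thesis using s1 s4 E1 E2 by simp
qed


lemma unit_cnj_inv: "cmod (u::complex) = 1 \<Longrightarrow> cnj u = inverse u"
  using unit_cnj[of u] by (metis inverse_unique)

lemma alg_plus:
  fixes c uA uB \<delta> a0 :: complex and rA rB :: real
  assumes u: "cmod c = 1" "cmod uA = 1" "cmod uB = 1" "cmod \<delta> = 1" "cmod a0 = 1"
  shows "cnj (c * a0) * ((c * cnj uA * a0) * (uA * rA)) = rA"
    "cnj (c * a0) * ((c * cnj uB * a0) * (uB * rB)) = rB"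
    "cnj (c * (c * cnj uB * (c * cnj uA * a0))) * ((c * cnj uA * a0) * (- \<delta> * cnj (uB * rB))) = - (cnj (c * c) * \<delta>) * rB"
    "cnj (c * (c * cnj uB * (c * cnj uA * a0))) * ((c * cnj uB * a0) * (\<delta> * cnj (uA * rA))) = (cnj (c * c) * \<delta>) * rA"
proof -
  have nz: "c \<noteq> 0" "uA \<noteq> 0" "uB \<noteq> 0" "\<delta> \<noteq> 0" "a0 \<noteq> 0" using u by auto
  note i = unit_cnj_inv[OF u(1)] unit_cnj_inv[OF u(2)] unit_cnj_inv[OF u(3)] unit_cnj_inv[OF u(4)] unit_cnj_inv[OF u(5)]
  show "cnj (c * a0) * ((c * cnj uA * a0) * (uA * rA)) = rA"
    using nz by (simp add: i field_simps)
  show "cnj (c * a0) * ((c * cnj uB * a0) * (uB * rB)) = rB"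
    using nz by (simp add: i field_simps)
  show "cnj (c * (c * cnj uB * (c * cnj uA * a0))) * ((c * cnj uA * a0) * (- \<delta> * cnj (uB * rB))) = - (cnj (c * c) * \<delta>) * rB"
    using nz by (simp add: i field_simps)
  show "cnj (c * (c * cnj uB * (c * cnj uA * a0))) * ((c * cnj uB * a0) * (\<delta> * cnj (uA * rA))) = (cnj (c * c) * \<delta>) * rA"
    using nz by (simp add: i field_simps)
qed

lemma alg_minus:
  fixes c uA uB uB' \<delta> a0 :: complex and rA rB :: real
  assumes u: "cmod c = 1" "cmod uA = 1" "cmod uB = 1" "cmod uB' = 1" "cmod \<delta> = 1" "cmod a0 = 1"
    and cc: "c * c = \<delta> * uB * cnj uB'"
  shows "cnj (c * a0) * ((c * cnj uA * a0) * (uA * rA)) = rA"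
    "cnj (c * a0) * ((c * cnj uB * a0) * (uB' * rB)) = (cnj (c * c) * \<delta>) * rB"
    "cnj (c * (c * cnj uB * (c * cnj uA * a0))) * ((c * cnj uA * a0) * (- \<delta> * cnj (uB' * rB))) = - complex_of_real rB"
    "cnj (c * (c * cnj uB * (c * cnj uA * a0))) * ((c * cnj uB * a0) * (\<delta> * cnj (uA * rA))) = (cnj (c * c) * \<delta>) * rA"
proof -
  have nz: "c \<noteq> 0" "uA \<noteq> 0" "uB \<noteq> 0" "uB' \<noteq> 0" "\<delta> \<noteq> 0" "a0 \<noteq> 0" using u by auto
  note i = unit_cnj_inv[OF u(1)] unit_cnj_inv[OF u(2)] unit_cnj_inv[OF u(3)] unit_cnj_inv[OF u(4)] unit_cnj_inv[OF u(5)] unit_cnj_inv[OF u(6)]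
  have cc': "cnj (c * c) = inverse (\<delta> * uB * cnj uB')" using cc i by (simp add: field_simps)
  show "cnj (c * a0) * ((c * cnj uA * a0) * (uA * rA)) = rA"
    using nz by (simp add: i field_simps)
  show "cnj (c * a0) * ((c * cnj uB * a0) * (uB' * rB)) = (cnj (c * c) * \<delta>) * rB"
    using nz unfolding cc' by (simp add: i field_simps)
  show "cnj (c * (c * cnj uB * (c * cnj uA * a0))) * ((c * cnj uA * a0) * (- \<delta> * cnj (uB' * rB))) = - complex_of_real rB"
    using nz cc by (simp add: i field_simps)
  show "cnj (c * (c * cnj uB * (c * cnj uA * a0))) * ((c * cnj uB * a0) * (\<delta> * cnj (uA * rA))) = (cnj (c * c) * \<delta>) * rA"
    using nz by (simp add: i field_simps)
qed


lemma onp_sym: "orthonormal_pair x y \<Longrightarrow> orthonormal_pair y x"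
  unfolding orthonormal_pair_def cinner2
  by (metis complex_cnj_add complex_cnj_cnj complex_cnj_mult complex_cnj_zero mult.commute)

lemma onp_param:
  assumes "orthonormal_pair x y"
  shows "\<exists>k. cmod k = 1 \<and> y = vec2 (- k * cnj (x$2)) (k * cnj (x$1))"
proof -
  obtain x1 x2 y1 y2 where xy: "x = vec2 x1 x2" "y = vec2 y1 y2" by (meson vec2_eta)
  have h: "cnj x1 * x1 + cnj x2 * x2 = 1" "cnj y1 * y1 + cnj y2 * y2 = 1" "cnj x1 * y1 + cnj x2 * y2 = 0"
    using assms unfolding orthonormal_pair_def cinner2 xy by simp_all
  have h': "x1 * cnj y1 + x2 * cnj y2 = 0" using arg_cong[OF h(3), of cnj] by simp
  define k where "k = x1 * y2 - x2 * y1"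
  have e1: "y1 = - k * cnj x2" unfolding k_def using h h' by algebra
  have e2: "y2 = k * cnj x1" unfolding k_def using h h' by algebra
  have "cnj k * k = 1" unfolding k_def using h h' by (simp add: algebra_simps) algebra
  then have "cmod k = 1" by (rule unit_of_cnj)
  then show ?thesis using e1 e2 xy by auto
qed

lemma coin:
  assumes "orthonormal_pair x y" "orthonormal_pair z w"
  shows "cmod (cinner x z)^2 + cmod (cinner y z)^2 = 1 \<and>
    (\<exists>d. cmod d = 1 \<and> cinner x w = - d * cnj (cinner y z) \<and> cinner y w = d * cnj (cinner x z))"
proof -
  obtain k where k: "cmod k = 1" "y = vec2 (- k * cnj (x$2)) (k * cnj (x$1))" using onp_param[OF assms(1)] by blast
  obtain m where m: "cmod m = 1" "w = vec2 (- m * cnj (z$2)) (m * cnj (z$1))" using onp_param[OF assms(2)] by blast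
  obtain x1 x2 z1 z2 where xz: "x = vec2 x1 x2" "z = vec2 z1 z2" by (meson vec2_eta)
  have h: "cnj x1 * x1 + cnj x2 * x2 = 1" "cnj z1 * z1 + cnj z2 * z2 = 1"
    using assms unfolding orthonormal_pair_def cinner2 xz by simp_all
  have kk: "cnj k * k = 1" using unit_cnj'[OF k(1)] .
  have "complex_of_real (cmod (cinner x z)^2 + cmod (cinner y z)^2) = 1"
    unfolding of_real_add complex_norm_square k(2) xz cinner2
    using h kk by (simp add: algebra_simps) algebra
  then have n: "cmod (cinner x z)^2 + cmod (cinner y z)^2 = 1" by (metis of_real_eq_1_iff)
  have "cinner x w = - (m * cnj k) * cnj (cinner y z) \<and> cinner y w = (m * cnj k) * cnj (cinner x z)"
    unfolding k(2) m(2) xz cinner2 using kk by (simp add: algebra_simps) algebra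
  moreover have "cmod (m * cnj k) = 1" using k m by (simp add: norm_mult)
  ultimately show ?thesis using n by blast
qed


definition ph :: "complex \<Rightarrow> complex" where
  "ph z = (if z = 0 then 1 else sgn z)"

lemma ph_unit: "cmod (ph z) = 1"
  by (simp add: ph_def norm_sgn)

lemma ph_mult: "z = ph z * of_real (cmod z)"
  by (simp add: ph_def sgn_eq)

lemma cinner_sym: "cinner y x = cnj (cinner x y)"
  by (simp add: cinner2 mult.commute)

lemma kb_vec2_e1: "ketbra (vec2 k 0) y = ketbra e1 (cnj k *s y)"
  by (simp add: mat_eq2 e1_eq)
lemma kb_vec2_e2: "ketbra (vec2 0 k) y = ketbra e2 (cnj k *s y)"
  by (simp add: mat_eq2 e2_eq)

definition mkW :: "complex \<Rightarrow> complex \<Rightarrow> complex^2 \<Rightarrow> complex^2 \<Rightarrow> complex^2^2" where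
  "mkW a b x y = vector [vec2 (a * cnj (x$1)) (a * cnj (x$2)), vec2 (b * cnj (y$1)) (b * cnj (y$2))]"

lemma mkW_nth: "mkW a b x y $1$j = a * cnj (x$j)" "mkW a b x y $2$j = b * cnj (y$j)"
proof -
  have "j = 1 \<or> j = 2" by (rule exhaust_2)
  then show "mkW a b x y $1$j = a * cnj (x$j)" "mkW a b x y $2$j = b * cnj (y$j)"
    by (auto simp: mkW_def)
qed

lemma mkW_mv: "mkW a b x y *v v = vec2 (a * cinner x v) (b * cinner y v)"
  by (simp add: vec_eq_iff forall_2 mv_nth mkW_nth cinner2 algebra_simps)

lemma mkW_unitary:
  assumes "orthonormal_pair x y" "cmod a = 1" "cmod b = 1"
  shows "unitary2 (mkW a b x y)"
proof -
  have o: "cinner x x = 1" "cinner y y = 1" "cinner x y = 0" "cinner y x = 0"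
    using assms(1) unfolding orthonormal_pair_def by (auto simp: cinner_sym[of x y])
  have ab: "a * cnj a = 1" "b * cnj b = 1" using unit_cnj assms(2,3) by auto
  have e: "(mkW a b x y ** cadj (mkW a b x y))$1$1 = a * cnj a * cinner x x"
    "(mkW a b x y ** cadj (mkW a b x y))$1$2 = a * cnj b * cinner x y"
    "(mkW a b x y ** cadj (mkW a b x y))$2$1 = b * cnj a * cinner y x"
    "(mkW a b x y ** cadj (mkW a b x y))$2$2 = b * cnj b * cinner y y"
    by (simp_all add: mm_nth mkW_nth cinner2 algebra_simps)
  have "mkW a b x y ** cadj (mkW a b x y) = mat 1"
    unfolding mat_eq2 e o ab by (simp add: mat1_nth)
  then show ?thesis unfolding unitary2_def using matrix_left_right_inverse by blast
qed


lemma part1: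
  assumes "complete_two_phase U"
  shows "\<exists>rp rm \<sigma>1 \<sigma>2. 0 \<le> rp \<and> rp \<le> 1 \<and> 0 \<le> rm \<and> rm \<le> 1 \<and> unit_equiv U (Uwalk rp rm \<sigma>1 \<sigma>2)"
proof -
  obtain \<xi> \<zeta> \<xi>1p \<xi>2p \<zeta>1p \<zeta>2p \<xi>1m \<xi>2m \<zeta>1m \<zeta>2m where rep: "walk_rep U \<xi> \<zeta>" and
    P: "\<forall>n::int. n \<ge> 0 \<longrightarrow> \<xi> n (n + 1) = \<xi>1p \<and> \<xi> n (n - 1) = \<xi>2p \<and> \<zeta> (n - 1) n = \<zeta>1p \<and> \<zeta> (n + 1) n = \<zeta>2p" and
    M: "\<forall>n::int. n \<le> -1 \<longrightarrow> \<xi> n (n + 1) = \<xi>1m \<and> \<xi> n (n - 1) = \<xi>2m \<and> \<zeta> (n - 1) n = \<zeta>1m \<and> \<zeta> (n + 1) n = \<zeta>2m"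
    using assms unfolding complete_two_phase_def by blast
  define X1 where "X1 m = (if m \<ge> 0 then \<xi>1p else \<xi>1m)" for m :: int
  define X2 where "X2 m = (if m \<ge> 0 then \<xi>2p else \<xi>2m)" for m :: int
  define Z1 where "Z1 m = (if m \<ge> 0 then \<zeta>1p else \<zeta>1m)" for m :: int
  define Z2 where "Z2 m = (if m \<ge> 0 then \<zeta>2p else \<zeta>2m)" for m :: int
  have xz: "\<xi> m (m+1) = X1 m" "\<xi> m (m-1) = X2 m" "\<zeta> (m-1) m = Z1 m" "\<zeta> (m+1) m = Z2 m" for m
    using P M unfolding X1_def X2_def Z1_def Z2_def by (cases "m \<ge> 0"; simp)+
  have Ulo: "U (m-1) m = ketbra (X1 (m-1)) (Z1 m)" for m
    using rep xz(1)[of "m-1"] xz(3)[of m] unfolding walk_rep_def by simp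
  have Uhi: "U (m+1) m = ketbra (X2 (m+1)) (Z2 m)" for m
    using rep xz(2)[of "m+1"] xz(4)[of m] unfolding walk_rep_def by simp
  have U0: "U n m = 0" if "n \<noteq> m-1" "n \<noteq> m+1" for n m
    using rep that unfolding walk_rep_def by auto
  have onX: "orthonormal_pair (X1 m) (X2 m)" for m
    using rep xz(1,2)[of m] unfolding walk_rep_def by metis
  have onZ: "orthonormal_pair (Z1 m) (Z2 m)" for m
    using rep xz(3,4)[of m] onp_sym unfolding walk_rep_def by metis
  define A where "A = cinner \<xi>1p \<zeta>1p"
  define B where "B = cinner \<xi>2p \<zeta>1p"
  define A' where "A' = cinner \<xi>1m \<zeta>1m"
  define B' where "B' = cinner \<xi>2m \<zeta>1m"
  obtain d where d: "cmod d = 1" "cinner \<xi>1p \<zeta>2p = - d * cnj B" "cinner \<xi>2p \<zeta>2p = d * cnj A"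
    and nA: "cmod A ^ 2 + cmod B ^ 2 = 1"
    using coin[OF onX[of 0] onZ[of 0]] unfolding X1_def X2_def Z1_def Z2_def A_def B_def by auto
  obtain d' where d': "cmod d' = 1" "cinner \<xi>1m \<zeta>2m = - d' * cnj B'" "cinner \<xi>2m \<zeta>2m = d' * cnj A'"
    and nA': "cmod A' ^ 2 + cmod B' ^ 2 = 1"
    using coin[OF onX[of "-1"] onZ[of "-1"]] unfolding X1_def X2_def Z1_def Z2_def A'_def B'_def by auto
  define uA where "uA = ph A"
  define uB where "uB = ph B"
  define uA' where "uA' = ph A'"
  define uB' where "uB' = ph B'"
  have uu: "cmod uA = 1" "cmod uB = 1" "cmod uA' = 1" "cmod uB' = 1"
    unfolding uA_def uB_def uA'_def uB'_def by (simp_all add: ph_unit)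
  define z0 where "z0 = d' * uB * cnj uB'"
  have z0u: "cmod z0 = 1" using d' uu unfolding z0_def by (simp add: norm_mult)
  define lam where "lam = Arg z0 / 2"
  define c where "c = cis lam"
  have cu: "cmod c = 1" unfolding c_def by simp
  have cc: "c * c = z0"
  proof -
    have "c * c = cis (Arg z0)" unfolding c_def lam_def cis_mult by simp
    also have "\<dots> = z0"
    proof -
      have "z0 \<noteq> 0" using z0u by auto
      then show ?thesis using cis_Arg[of z0] z0u by (simp add: sgn_eq)
    qed
    finally show ?thesis .
  qed
  define E1 where "E1 = cnj (c * c) * d"
  define E2 where "E2 = cnj (c * c) * d'"
  have E1n: "cmod E1 = 1" using cu d unfolding E1_def by (simp add: norm_mult)
  have E2n: "cmod E2 = 1" using cu d' unfolding E2_def by (simp add: norm_mult)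
  have E1u: "cis (Arg E1) = E1"
  proof -
    have "E1 \<noteq> 0" using E1n by auto
    then show ?thesis using cis_Arg[of E1] E1n by (simp add: sgn_eq)
  qed
  have E2u: "cis (Arg E2) = E2"
  proof -
    have "E2 \<noteq> 0" using E2n by auto
    then show ?thesis using cis_Arg[of E2] E2n by (simp add: sgn_eq)
  qed
  define g where "g = c * cnj uA"
  define h where "h = c * cnj uA'"
  have gh: "cmod g = 1" "cmod h = 1" unfolding g_def h_def using cu uu by (simp_all add: norm_mult)
  define \<alpha> where "\<alpha> m = (if m \<ge> 0 then g ^ nat m else cnj g * cnj h ^ nat (-m-1))" for m :: int
  have \<alpha>u: "cmod (\<alpha> m) = 1" for m
    unfolding \<alpha>_def using gh by (simp add: norm_mult norm_power)
  have \<alpha>p: "\<alpha> m = g * \<alpha> (m-1)" if "m \<ge> 0" for m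
  proof (cases "m = 0")
    case True
    then show ?thesis unfolding \<alpha>_def using unit_cnj[OF gh(1)] by simp
  next
    case False
    then have "nat m = Suc (nat (m-1))" using that by simp
    then show ?thesis unfolding \<alpha>_def using that False by simp
  qed
  have \<alpha>m: "\<alpha> m = h * \<alpha> (m-1)" if "m < 0" for m
  proof -
    have n: "nat (-m) = Suc (nat (-m-1))" using that by simp
    have "\<alpha> (m-1) = cnj g * cnj h ^ nat (-m)" unfolding \<alpha>_def using that by simp
    also have "\<dots> = cnj g * (cnj h * cnj h ^ nat (-m-1))" unfolding n by simp
    finally have e: "h * \<alpha> (m-1) = (h * cnj h) * (cnj g * cnj h ^ nat (-m-1))" by (simp add: algebra_simps)
    have "\<alpha> m = cnj g * cnj h ^ nat (-m-1)" unfolding \<alpha>_def using that by simp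
    also have "\<dots> = (h * cnj h) * (cnj g * cnj h ^ nat (-m-1))" using unit_cnj[OF gh(2)] by simp
    finally show ?thesis using e by (simp only:)
  qed
  define \<beta> where "\<beta> m = c * cnj uB * \<alpha> (m-1)" for m
  have \<beta>u: "cmod (\<beta> m) = 1" for m unfolding \<beta>_def using cu uu \<alpha>u by (simp add: norm_mult)
  define W where "W m = mkW (\<alpha> m) (\<beta> m) (X1 m) (X2 m)" for m
  have Wu: "unitary2 (W m)" for m unfolding W_def using mkW_unitary onX \<alpha>u \<beta>u by blast
  have o: "cinner (X1 m) (X1 m) = 1" "cinner (X2 m) (X1 m) = 0" "cinner (X1 m) (X2 m) = 0" "cinner (X2 m) (X2 m) = 1" for m
    using onX[of m] unfolding orthonormal_pair_def by (auto simp: cinner_sym[of "X1 m" "X2 m"])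
  have WX1: "W m *v X1 m = vec2 (\<alpha> m) 0" for m unfolding W_def mkW_mv o by simp
  have WX2: "W m *v X2 m = vec2 0 (\<beta> m)" for m unfolding W_def mkW_mv o by simp
  define rp where "rp = cmod A"
  define rm where "rm = cmod A'"
  define rB where "rB = cmod B"
  define rB' where "rB' = cmod B'"
  have srp: "sqrt (1 - rp\<^sup>2) = rB"
  proof -
    have "1 - rp\<^sup>2 = rB\<^sup>2" using nA unfolding rp_def rB_def by linarith
    then show ?thesis unfolding rB_def by (simp add: real_sqrt_abs)
  qed
  have srm: "sqrt (1 - rm\<^sup>2) = rB'"
  proof -
    have "1 - rm\<^sup>2 = rB'\<^sup>2" using nA' unfolding rm_def rB'_def by linarith
    then show ?thesis unfolding rB'_def by (simp add: real_sqrt_abs)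
  qed
  have bnd: "0 \<le> rp \<and> rp \<le> 1 \<and> 0 \<le> rm \<and> rm \<le> 1"
  proof -
    have "rp\<^sup>2 \<le> 1" "rm\<^sup>2 \<le> 1" using nA nA' unfolding rp_def rm_def by (smt (verit) zero_le_power2)+
    then show ?thesis unfolding abs_square_le_1 rp_def rm_def by simp
  qed
  have Ae: "A = uA * of_real rp" "B = uB * of_real rB" "A' = uA' * of_real rm" "B' = uB' * of_real rB'"
    unfolding uA_def uB_def uA'_def uB'_def rp_def rB_def rm_def rB'_def by (simp_all flip: ph_mult)
  have Lo: "csmult c (W (m-1) ** U (m-1) m ** cadj (W m)) = ketbra e1 (vec2 (cnj (c * \<alpha> (m-1)) * (\<alpha> m * cinner (X1 m) (Z1 m))) (cnj (c * \<alpha> (m-1)) * (\<beta> m * cinner (X2 m) (Z1 m))))" for m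
    unfolding Ulo kb_mult csmult_kb WX1 by (simp add: W_def mkW_mv smult_vec2 kb_vec2_e1)
  have c1: "csmult c (W (m-1) ** U (m-1) m ** cadj (W m)) = Uwalk rp rm (Arg E1) (Arg E2) (m-1) m" if m: "m \<ge> 0" for m
  proof -
    have e: "\<alpha> m = c * cnj uA * \<alpha> (m-1)" "\<beta> m = c * cnj uB * \<alpha> (m-1)"
      "cinner (X1 m) (Z1 m) = uA * of_real rp" "cinner (X2 m) (Z1 m) = uB * of_real rB"
      using \<alpha>p[OF m] m Ae unfolding \<beta>_def g_def X1_def X2_def Z1_def A_def B_def by simp_all
    have v: "vec2 (cnj (c * \<alpha> (m-1)) * (\<alpha> m * cinner (X1 m) (Z1 m))) (cnj (c * \<alpha> (m-1)) * (\<beta> m * cinner (X2 m) (Z1 m)))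
          = vec2 (of_real rp) (of_real rB)"
      unfolding e vec2_eq_iff by (rule conjI[OF alg_plus(1)[OF cu uu(1) uu(2) d(1) \<alpha>u[of "m-1"], of rp] alg_plus(2)[OF cu uu(1) uu(2) d(1) \<alpha>u[of "m-1"], of rB]])
    show ?thesis unfolding Lo v using m by (simp add: Uw_lo srp)
  qed
  have c2: "csmult c (W (m-1) ** U (m-1) m ** cadj (W m)) = Uwalk rp rm (Arg E1) (Arg E2) (m-1) m" if m: "\<not> m \<ge> 0" for m
  proof -
    have mn: "m < 0" using m by simp
    have e: "\<alpha> m = c * cnj uA' * \<alpha> (m-1)" "\<beta> m = c * cnj uB * \<alpha> (m-1)"
      "cinner (X1 m) (Z1 m) = uA' * of_real rm" "cinner (X2 m) (Z1 m) = uB' * of_real rB'"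
      using \<alpha>m[OF mn] m Ae unfolding \<beta>_def h_def X1_def X2_def Z1_def A'_def B'_def by simp_all
    have v: "vec2 (cnj (c * \<alpha> (m-1)) * (\<alpha> m * cinner (X1 m) (Z1 m))) (cnj (c * \<alpha> (m-1)) * (\<beta> m * cinner (X2 m) (Z1 m)))
          = vec2 (of_real rm) (E2 * of_real rB')"
      unfolding e E2_def vec2_eq_iff
      by (rule conjI[OF alg_minus(1)[OF cu uu(3) uu(2) uu(4) d'(1) \<alpha>u[of "m-1"] cc[unfolded z0_def], of rm] alg_minus(2)[OF cu uu(3) uu(2) uu(4) d'(1) \<alpha>u[of "m-1"] cc[unfolded z0_def], of rB']])
    show ?thesis unfolding Lo v using m by (simp add: Uw_lo srm E2u)
  qed
  have Hi: "csmult c (W (m+1) ** U (m+1) m ** cadj (W m)) = ketbra e2 (vec2 (cnj (c * \<beta> (m+1)) * (\<alpha> m * cinner (X1 m) (Z2 m))) (cnj (c * \<beta> (m+1)) * (\<beta> m * cinner (X2 m) (Z2 m))))" for m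
    unfolding Uhi kb_mult csmult_kb WX2 by (simp add: W_def mkW_mv smult_vec2 kb_vec2_e2)
  have c3: "csmult c (W (m+1) ** U (m+1) m ** cadj (W m)) = Uwalk rp rm (Arg E1) (Arg E2) (m+1) m" if m: "m \<ge> 0" for m
  proof -
    have e: "\<beta> (m+1) = c * cnj uB * (c * cnj uA * \<alpha> (m-1))" "\<alpha> m = c * cnj uA * \<alpha> (m-1)" "\<beta> m = c * cnj uB * \<alpha> (m-1)"
      "cinner (X1 m) (Z2 m) = - d * cnj (uB * of_real rB)" "cinner (X2 m) (Z2 m) = d * cnj (uA * of_real rp)"
      using \<alpha>p[OF m] m Ae d unfolding \<beta>_def g_def X1_def X2_def Z2_def A_def B_def by simp_all
    have v: "vec2 (cnj (c * \<beta> (m+1)) * (\<alpha> m * cinner (X1 m) (Z2 m))) (cnj (c * \<beta> (m+1)) * (\<beta> m * cinner (X2 m) (Z2 m)))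
            = vec2 (- E1 * of_real rB) (E1 * of_real rp)"
      unfolding e E1_def vec2_eq_iff
      by (rule conjI[OF alg_plus(3)[OF cu uu(1) uu(2) d(1) \<alpha>u[of "m-1"], of rB] alg_plus(4)[OF cu uu(1) uu(2) d(1) \<alpha>u[of "m-1"], of rp]])
    show ?thesis unfolding Hi v using m by (simp add: Uw_hi srp E1u)
  qed
  have c4: "csmult c (W (m+1) ** U (m+1) m ** cadj (W m)) = Uwalk rp rm (Arg E1) (Arg E2) (m+1) m" if m: "\<not> m \<ge> 0" for m
  proof -
    have mn: "m < 0" using m by simp
    have e: "\<beta> (m+1) = c * cnj uB * (c * cnj uA' * \<alpha> (m-1))" "\<alpha> m = c * cnj uA' * \<alpha> (m-1)" "\<beta> m = c * cnj uB * \<alpha> (m-1)"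
      "cinner (X1 m) (Z2 m) = - d' * cnj (uB' * of_real rB')" "cinner (X2 m) (Z2 m) = d' * cnj (uA' * of_real rm)"
      using \<alpha>m[OF mn] m Ae d' unfolding \<beta>_def h_def X1_def X2_def Z2_def A'_def B'_def by simp_all
    have v: "vec2 (cnj (c * \<beta> (m+1)) * (\<alpha> m * cinner (X1 m) (Z2 m))) (cnj (c * \<beta> (m+1)) * (\<beta> m * cinner (X2 m) (Z2 m)))
            = vec2 (- of_real rB') (E2 * of_real rm)"
      unfolding e E2_def vec2_eq_iff
      by (rule conjI[OF alg_minus(3)[OF cu uu(3) uu(2) uu(4) d'(1) \<alpha>u[of "m-1"] cc[unfolded z0_def], of rB'] alg_minus(4)[OF cu uu(3) uu(2) uu(4) d'(1) \<alpha>u[of "m-1"] cc[unfolded z0_def], of rm]])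
    show ?thesis unfolding Hi v using m by (simp add: Uw_hi srm E2u)
  qed
  have gmain: "csmult c (W n ** U n m ** cadj (W m)) = Uwalk rp rm (Arg E1) (Arg E2) n m" for n m
  proof (cases "n = m - 1")
    case True
    then show ?thesis using c1[of m] c2[of m] by (cases "m \<ge> 0") simp_all
  next
    case F1: False
    show ?thesis
    proof (cases "n = m + 1")
      case True
      then show ?thesis using c3[of m] c4[of m] by (cases "m \<ge> 0") simp_all
    next
      case False
      have u0: "U n m = 0" using U0[OF F1 False] .
      have "Uwalk rp rm (Arg E1) (Arg E2) n m = 0" using F1 False by (simp add: Uwalk_def)
      moreover have "csmult c (W n ** 0 ** cadj (W m)) = 0" by (simp add: mat_eq2 mm_nth)
      ultimately show ?thesis unfolding u0 by simp
    qed
  qed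
  have "unit_equiv U (Uwalk rp rm (Arg E1) (Arg E2))"
    unfolding unit_equiv_def
  proof (intro exI conjI allI)
    show "unitary2 (W n)" for n by (rule Wu)
    show "csmult (cis lam) (W n ** U n m ** cadj (W m)) = Uwalk rp rm (Arg E1) (Arg E2) n m" for n m
      using gmain[of n m] unfolding c_def .
  qed
  then show ?thesis using bnd by blast
qed

theorem theorem2p12:
  shows "(\<forall>U. complete_two_phase U \<longrightarrow>
            (\<exists>rp rm \<sigma>1 \<sigma>2. 0 \<le> rp \<and> rp \<le> 1 \<and> 0 \<le> rm \<and> rm \<le> 1 \<and>
                unit_equiv U (Uwalk rp rm \<sigma>1 \<sigma>2)))
       \<and> (\<forall>rp rm \<sigma>1 \<sigma>2 rp' rm' \<sigma>1' \<sigma>2'.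
            0 < rp \<and> rp < 1 \<and> 0 < rm \<and> rm < 1 \<and> 0 < rp' \<and> rp' < 1 \<and> 0 < rm' \<and> rm' < 1 \<and>
            \<sigma>1 \<in> {0..<2*pi} \<and> \<sigma>2 \<in> {0..<2*pi} \<and> \<sigma>1' \<in> {0..<2*pi} \<and> \<sigma>2' \<in> {0..<2*pi} \<longrightarrow>
            (unit_equiv (Uwalk rp rm \<sigma>1 \<sigma>2) (Uwalk rp' rm' \<sigma>1' \<sigma>2') \<longleftrightarrow>
             rp = rp' \<and> rm = rm' \<and> \<sigma>1 = \<sigma>1' \<and> \<sigma>2 = \<sigma>2'))"
proof (intro conjI allI impI)
  fix U assume "complete_two_phase U"
  then show "\<exists>rp rm \<sigma>1 \<sigma>2. 0 \<le> rp \<and> rp \<le> 1 \<and> 0 \<le> rm \<and> rm \<le> 1 \<and> unit_equiv U (Uwalk rp rm \<sigma>1 \<sigma>2)"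
    by (rule part1)
next
  fix rp rm \<sigma>1 \<sigma>2 rp' rm' \<sigma>1' \<sigma>2' :: real
  assume h: "0 < rp \<and> rp < 1 \<and> 0 < rm \<and> rm < 1 \<and> 0 < rp' \<and> rp' < 1 \<and> 0 < rm' \<and> rm' < 1 \<and>
            \<sigma>1 \<in> {0..<2*pi} \<and> \<sigma>2 \<in> {0..<2*pi} \<and> \<sigma>1' \<in> {0..<2*pi} \<and> \<sigma>2' \<in> {0..<2*pi}"
  show "unit_equiv (Uwalk rp rm \<sigma>1 \<sigma>2) (Uwalk rp' rm' \<sigma>1' \<sigma>2') \<longleftrightarrow>
             rp = rp' \<and> rm = rm' \<and> \<sigma>1 = \<sigma>1' \<and> \<sigma>2 = \<sigma>2'"
  proof
    assume ue: "unit_equiv (Uwalk rp rm \<sigma>1 \<sigma>2) (Uwalk rp' rm' \<sigma>1' \<sigma>2')"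
    have "rp = rp' \<and> rm = rm' \<and> cis \<sigma>1 = cis \<sigma>1' \<and> cis \<sigma>2 = cis \<sigma>2'"
      using part2[OF _ _ _ _ _ _ _ _ ue] h by blast
    then show "rp = rp' \<and> rm = rm' \<and> \<sigma>1 = \<sigma>1' \<and> \<sigma>2 = \<sigma>2'"
      using cis_inj h by blast
  next
    assume "rp = rp' \<and> rm = rm' \<and> \<sigma>1 = \<sigma>1' \<and> \<sigma>2 = \<sigma>2'"
    then show "unit_equiv (Uwalk rp rm \<sigma>1 \<sigma>2) (Uwalk rp' rm' \<sigma>1' \<sigma>2')"
      unfolding unit_equiv_def
    proof (intro exI[of _ 0] exI[of _ "\<lambda>n. mat 1"] conjI allI)
      show "unitary2 (mat 1)" by (simp add: unitary2_def mat_eq2 mm_nth mat1_nth)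
      show "csmult (cis 0) (mat 1 ** Uwalk rp rm \<sigma>1 \<sigma>2 n m ** cadj (mat 1)) = Uwalk rp' rm' \<sigma>1' \<sigma>2' n m" for n m
        using \<open>rp = rp' \<and> rm = rm' \<and> \<sigma>1 = \<sigma>1' \<and> \<sigma>2 = \<sigma>2'\<close> by (simp add: mat_eq2 mm_nth mat1_nth)
    qed
  qed
qed

end
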